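(* Let $C,D$ be $\mathcal{FL}_{\bot\mathit{reg}}$ concept descriptions and $\mathcal T$ an $\mathcal{FL}_{\bot\mathit{reg}}$ TBox. Let $\Sigma_C\subseteq N_C$ and $\Sigma_R\subseteq N_R$ be the sets of all concept names, respectively role names, occurring in $C$, $D$ or $\mathcal T$, and let $B\in N_C\setminus\Sigma_C$ be a fresh concept name. For a concept description $K$ let $K^B$ be obtained from $K$ by replacing every occurrence of $\bot$ with $B$, and let $\mathcal T^B$ be obtained from $\mathcal T$ by replacing every occurrence of $\bot$ with $B$. Let $\mathcal R$ be the TBox consisting of the axioms $B\sqsubseteq A$ for every $A\in\Sigma_C$ and $B\sqsubseteq\forall r.B$ for every $r\in\Sigma_R$. Then $C\sqsubseteq_{\mathcal T}D$ holds if and only if $C^B\sqsubseteq_{\mathcal T^B\cup\mathcal R}D^B$ holds (the latter being an instance in $\mathcal{FL}_{\mathit{reg}}$).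
   Context: Let $N_C$ and $N_R$ be disjoint countably infinite sets of concept names and role names. Regular role expressions are generated by $E ::= \emptyset \mid \varepsilon \mid r \mid (E+E) \mid (EE) \mid E^{*}$ with $r\in N_R$, with languages $\mathcal L(E)\subseteq N_R^*$ defined as usual. $\mathcal{FL}_{\bot\mathit{reg}}$ concept descriptions are generated by $C ::= A \mid \top \mid \bot \mid (C\sqcap C) \mid \forall E.C$ with $A\in N_C$; $\mathcal{FL}_{\mathit{reg}}$ is the fragment without $\bot$. An interpretation $\mathcal I=(\Delta^{\mathcal I},\cdot^{\mathcal I})$ has nonempty domain, $A^{\mathcal I}\subseteq\Delta^{\mathcal I}$, $r^{\mathcal I}\subseteq(\Delta^{\mathcal I})^2$; $E^{\mathcal I}$ is the union over words $r_1\cdots r_n\in\mathcal L(E)$ of $r_1^{\mathcal I}\circ\cdots\circ r_n^{\mathcal I}$ (identity for the empty word); $\top^{\mathcal I}=\Delta^{\mathcal I}$, $\bot^{\mathcal I}=\emptyset$, $(C\sqcap D)^{\mathcal I}=C^{\mathcal I}\cap D^{\mathcal I}$, $(\forall E.C)^{\mathcal I}=\{x\mid y\in C^{\mathcal I}$ for all $y$ with $(x,y)\in E^{\mathcal I}\}$. A TBox is a finite set of axioms $K\sqsubseteq M$ between concept descriptions; $\mathcal I$ is a model of a TBox if $K^{\mathcal I}\subseteq M^{\mathcal I}$ for all its axioms; $C\sqsubseteq_{\mathcal T}D$ means $C^{\mathcal I}\subseteq D^{\mathcal I}$ for every model $\mathcal I$ of $\mathcal T$. *)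

theory Defs
  imports Main
begin

datatype 'r rexp = EmptyR | Eps | Role 'r | PlusR "'r rexp" "'r rexp"
  | TimesR "'r rexp" "'r rexp" | StarR "'r rexp"

inductive_set kleene :: "'a list set \<Rightarrow> 'a list set" for L where
  kleene_nil: "[] \<in> kleene L"
| kleene_app: "u \<in> L \<Longrightarrow> v \<in> kleene L \<Longrightarrow> u @ v \<in> kleene L"

fun lang :: "'r rexp \<Rightarrow> 'r list set" where
  "lang EmptyR = {}"
| "lang Eps = {[]}"
| "lang (Role r) = {[r]}"
| "lang (PlusR E F) = lang E \<union> lang F"
| "lang (TimesR E F) = {u @ v | u v. u \<in> lang E \<and> v \<in> lang F}"
| "lang (StarR E) = kleene (lang E)"

fun roles_rexp :: "'r rexp \<Rightarrow> 'r set" where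
  "roles_rexp EmptyR = {}"
| "roles_rexp Eps = {}"
| "roles_rexp (Role r) = {r}"
| "roles_rexp (PlusR E F) = roles_rexp E \<union> roles_rexp F"
| "roles_rexp (TimesR E F) = roles_rexp E \<union> roles_rexp F"
| "roles_rexp (StarR E) = roles_rexp E"

datatype ('c, 'r) concept = CName 'c | Top | Bot
  | Conj "('c, 'r) concept" "('c, 'r) concept"
  | All "'r rexp" "('c, 'r) concept"

fun cnames :: "('c, 'r) concept \<Rightarrow> 'c set" where
  "cnames (CName A) = {A}"
| "cnames Top = {}"
| "cnames Bot = {}"
| "cnames (Conj C D) = cnames C \<union> cnames D"
| "cnames (All E C) = cnames C"

fun rnames :: "('c, 'r) concept \<Rightarrow> 'r set" where
  "rnames (CName A) = {}"
| "rnames Top = {}"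
| "rnames Bot = {}"
| "rnames (Conj C D) = rnames C \<union> rnames D"
| "rnames (All E C) = roles_rexp E \<union> rnames C"

fun replBot :: "'c \<Rightarrow> ('c, 'r) concept \<Rightarrow> ('c, 'r) concept" where
  "replBot B (CName A) = CName A"
| "replBot B Top = Top"
| "replBot B Bot = CName B"
| "replBot B (Conj C D) = Conj (replBot B C) (replBot B D)"
| "replBot B (All E C) = All E (replBot B C)"

text \<open>A TBox is a finite set of axioms (K, M), meaning K below M.\<close>
type_synonym ('c, 'r) tbox = "(('c, 'r) concept \<times> ('c, 'r) concept) set"

definition tbox_cnames :: "('c, 'r) tbox \<Rightarrow> 'c set" where
  "tbox_cnames T = (\<Union>(K, M)\<in>T. cnames K \<union> cnames M)"

definition tbox_rnames :: "('c, 'r) tbox \<Rightarrow> 'r set" where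
  "tbox_rnames T = (\<Union>(K, M)\<in>T. rnames K \<union> rnames M)"

definition replBotT :: "'c \<Rightarrow> ('c, 'r) tbox \<Rightarrow> ('c, 'r) tbox" where
  "replBotT B T = (\<lambda>(K, M). (replBot B K, replBot B M)) ` T"

record ('d, 'c, 'r) interp =
  dom :: "'d set"
  cext :: "'c \<Rightarrow> 'd set"
  rext :: "'r \<Rightarrow> ('d \<times> 'd) set"

definition is_interp :: "('d, 'c, 'r) interp \<Rightarrow> bool" where
  "is_interp I \<longleftrightarrow> dom I \<noteq> {} \<and> (\<forall>A. cext I A \<subseteq> dom I) \<and>
     (\<forall>r. rext I r \<subseteq> dom I \<times> dom I)"

fun word_ext :: "('d, 'c, 'r) interp \<Rightarrow> 'r list \<Rightarrow> ('d \<times> 'd) set" where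
  "word_ext I [] = Id_on (dom I)"
| "word_ext I (r # w) = rext I r O word_ext I w"

definition rexp_ext :: "('d, 'c, 'r) interp \<Rightarrow> 'r rexp \<Rightarrow> ('d \<times> 'd) set" where
  "rexp_ext I E = (\<Union>w\<in>lang E. word_ext I w)"

fun cext_of :: "('d, 'c, 'r) interp \<Rightarrow> ('c, 'r) concept \<Rightarrow> 'd set" where
  "cext_of I (CName A) = cext I A"
| "cext_of I Top = dom I"
| "cext_of I Bot = {}"
| "cext_of I (Conj C D) = cext_of I C \<inter> cext_of I D"
| "cext_of I (All E C) = {x \<in> dom I. \<forall>y. (x, y) \<in> rexp_ext I E \<longrightarrow> y \<in> cext_of I C}"

definition is_model :: "('d, 'c, 'r) interp \<Rightarrow> ('c, 'r) tbox \<Rightarrow> bool" where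
  "is_model I T \<longleftrightarrow> is_interp I \<and> (\<forall>(K, M)\<in>T. cext_of I K \<subseteq> cext_of I M)"

definition subsumes :: "'d itself \<Rightarrow> ('c, 'r) concept \<Rightarrow> ('c, 'r) tbox \<Rightarrow> ('c, 'r) concept \<Rightarrow> bool" where
  "subsumes TYPE('d) C T D \<longleftrightarrow>
     (\<forall>I :: ('d, 'c, 'r) interp. is_model I T \<longrightarrow> cext_of I C \<subseteq> cext_of I D)"

end

theory Submission
  imports Defs
begin

lemma lang_roles: "w \<in> lang E \<Longrightarrow> set w \<subseteq> roles_rexp E"
proof (induction E arbitrary: w)
  case (StarR E)
  have "w \<in> kleene (lang E)" using StarR.prems by simp
  then show ?case
    by (induction rule: kleene.induct) (use StarR.IH in auto)
qed (fastforce+)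

lemma cext_of_dom: "is_interp I \<Longrightarrow> cext_of I K \<subseteq> dom I"
  by (induction K) (auto simp: is_interp_def)

lemma word_ext_dom: "is_interp I \<Longrightarrow> (x,y) \<in> word_ext I w \<Longrightarrow> x \<in> dom I \<and> y \<in> dom I"
  by (induction w arbitrary: x) (auto simp: is_interp_def)

lemma word_ext_upd: "word_ext (I\<lparr>cext := f\<rparr>) w = word_ext I w"
  by (induction w) auto

lemma rexp_ext_upd: "rexp_ext (I\<lparr>cext := f\<rparr>) E = rexp_ext I E"
  by (simp add: rexp_ext_def word_ext_upd)

lemma replBot_fresh:
  "B \<notin> cnames K \<Longrightarrow> cext_of (I\<lparr>cext := (cext I)(B := {})\<rparr>) (replBot B K) = cext_of I K"
  by (induction K) (auto simp: rexp_ext_upd)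

lemma closure_word:
  assumes "\<forall>r x y. r \<in> S \<longrightarrow> x \<in> X \<longrightarrow> (x,y) \<in> rext J r \<longrightarrow> y \<in> X"
  shows "set w \<subseteq> S \<Longrightarrow> x \<in> X \<Longrightarrow> (x,y) \<in> word_ext J w \<Longrightarrow> y \<in> X"
  using assms by (induction w arbitrary: x) auto

lemma B_in_all:
  assumes J: "is_interp J"
    and sub: "\<forall>A. A \<in> SC \<longrightarrow> cext J B \<subseteq> cext J A"
    and clo: "\<forall>r x y. r \<in> SR \<longrightarrow> x \<in> cext J B \<longrightarrow> (x,y) \<in> rext J r \<longrightarrow> y \<in> cext J B"
  shows "cnames K \<subseteq> SC \<Longrightarrow> rnames K \<subseteq> SR \<Longrightarrow> cext J B \<subseteq> cext_of J (replBot B K)"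
proof (induction K)
  case (All E K)
  have cloH: "\<forall>r x y. r \<in> SR \<longrightarrow> x \<in> cext J B \<longrightarrow> (x,y) \<in> rext J r \<longrightarrow> y \<in> cext J B"
    using clo by blast
  have "y \<in> cext J B" if xB: "x \<in> cext J B" and xy: "(x,y) \<in> rexp_ext J E" for x y
  proof -
    obtain w where w: "w \<in> lang E" "(x,y) \<in> word_ext J w" using xy by (auto simp: rexp_ext_def)
    have "set w \<subseteq> SR" using lang_roles[OF w(1)] All.prems by auto
    then show ?thesis using closure_word[of SR "cext J B" J w x y] cloH w xB by blast
  qed
  moreover have "cext J B \<subseteq> dom J" using J by (auto simp: is_interp_def)
  ultimately show ?case using All by auto
qed (use sub J in \<open>auto simp: is_interp_def\<close>)

definition restr :: "('d,'c,'r) interp \<Rightarrow> 'd set \<Rightarrow> ('d,'c,'r) interp" where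
  "restr J X = \<lparr>dom = dom J - X, cext = (\<lambda>A. cext J A - X),
      rext = (\<lambda>r. rext J r \<inter> ((dom J - X) \<times> (dom J - X)))\<rparr>"

lemma restr_dom[simp]: "dom (restr J X) = dom J - X" by (simp add: restr_def)
lemma restr_cext[simp]: "cext (restr J X) A = cext J A - X" by (simp add: restr_def)

lemma restr_interp: "is_interp J \<Longrightarrow> dom J - X \<noteq> {} \<Longrightarrow> is_interp (restr J X)"
  by (auto simp: is_interp_def restr_def)

lemma restr_word:
  assumes J: "is_interp J"
    and clo: "\<forall>r x y. r \<in> S \<longrightarrow> x \<in> X \<longrightarrow> (x,y) \<in> rext J r \<longrightarrow> y \<in> X"
  shows "set w \<subseteq> S \<Longrightarrow> x \<notin> X \<Longrightarrow>
     (x,y) \<in> word_ext (restr J X) w \<longleftrightarrow> (x,y) \<in> word_ext J w \<and> y \<notin> X"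
proof (induction w arbitrary: x)
  case Nil
  then show ?case by (auto simp: restr_def)
next
  case (Cons r w)
  show ?case
  proof
    assume "(x,y) \<in> word_ext (restr J X) (r # w)"
    then obtain z where z: "(x,z) \<in> rext J r" "z \<in> dom J - X" "(z,y) \<in> word_ext (restr J X) w"
      by (auto simp: restr_def)
    then show "(x,y) \<in> word_ext J (r # w) \<and> y \<notin> X" using Cons by auto
  next
    assume a: "(x,y) \<in> word_ext J (r # w) \<and> y \<notin> X"
    then obtain z where z: "(x,z) \<in> rext J r" "(z,y) \<in> word_ext J w" by auto
    have zX: "z \<notin> X"
    proof
      assume "z \<in> X"
      then have "y \<in> X" using closure_word[of S X J, OF clo] z Cons.prems by auto
      then show False using a by auto
    qed
    have "x \<in> dom J" "z \<in> dom J" using z(1) J by (auto simp: is_interp_def)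
    then have "(x,z) \<in> rext (restr J X) r" using z(1) zX Cons.prems by (auto simp: restr_def)
    moreover have "(z,y) \<in> word_ext (restr J X) w" using Cons zX z a by auto
    ultimately show "(x,y) \<in> word_ext (restr J X) (r # w)" by auto
  qed
qed

lemma restr_concept:
  assumes J: "is_interp J"
    and sub: "\<forall>A. A \<in> SC \<longrightarrow> cext J B \<subseteq> cext J A"
    and clo: "\<forall>r x y. r \<in> SR \<longrightarrow> x \<in> cext J B \<longrightarrow> (x,y) \<in> rext J r \<longrightarrow> y \<in> cext J B"
  shows "cnames K \<subseteq> SC \<Longrightarrow> rnames K \<subseteq> SR \<Longrightarrow> x \<in> dom J - cext J B \<Longrightarrow>
    x \<in> cext_of J (replBot B K) \<longleftrightarrow> x \<in> cext_of (restr J (cext J B)) K"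
proof (induction K arbitrary: x)
  case (All E K)
  have cloH: "\<forall>r x y. r \<in> SR \<longrightarrow> x \<in> cext J B \<longrightarrow> (x,y) \<in> rext J r \<longrightarrow> y \<in> cext J B"
    using clo by blast
  let ?X = "cext J B"
  have rw: "(x,y) \<in> rexp_ext (restr J ?X) E \<longleftrightarrow> (x,y) \<in> rexp_ext J E \<and> y \<notin> ?X" for y
  proof -
    have "\<And>w. w \<in> lang E \<Longrightarrow> set w \<subseteq> SR" using lang_roles All.prems by fastforce
    then show ?thesis using restr_word[of J SR ?X] J cloH All.prems
      by (auto simp: rexp_ext_def)
  qed
  have allB: "?X \<subseteq> cext_of J (replBot B K)" using B_in_all[OF J sub clo] All.prems by auto
  have dy: "(x,y) \<in> rexp_ext J E \<Longrightarrow> y \<in> dom J" for y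
    using word_ext_dom[OF J] by (auto simp: rexp_ext_def)
  have xd: "x \<in> dom (restr J ?X)" using All.prems by (simp add: restr_dom)
  have IH: "y \<in> cext_of J (replBot B K) \<longleftrightarrow> y \<in> cext_of (restr J ?X) K"
    if "y \<in> dom J - ?X" for y
    using All.IH[OF _ _ that] All.prems by simp
  show ?case
  proof
    assume a: "x \<in> cext_of J (replBot B (All E K))"
    have "y \<in> cext_of (restr J ?X) K" if "(x,y) \<in> rexp_ext (restr J ?X) E" for y
    proof -
      have "(x,y) \<in> rexp_ext J E" "y \<notin> ?X" using rw that by auto
      then show ?thesis using a dy IH by auto
    qed
    then show "x \<in> cext_of (restr J ?X) (All E K)" using xd by simp
  next
    assume a: "x \<in> cext_of (restr J ?X) (All E K)"
    have "y \<in> cext_of J (replBot B K)" if xy: "(x,y) \<in> rexp_ext J E" for y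
    proof (cases "y \<in> ?X")
      case True then show ?thesis using allB by auto
    next
      case False
      then have "(x,y) \<in> rexp_ext (restr J ?X) E" using rw xy by auto
      then have "y \<in> cext_of (restr J ?X) K" using a by auto
      then show ?thesis using IH dy[OF xy] False by auto
    qed
    then show "x \<in> cext_of J (replBot B (All E K))" using All.prems by auto
  qed
qed (auto simp: restr_dom restr_cext)

lemma model_ax: "is_model I T \<Longrightarrow> (K,M) \<in> T \<Longrightarrow> cext_of I K \<subseteq> cext_of I M"
  unfolding is_model_def by blast

theorem theorem2:
  fixes C D :: "('c, 'r) concept" and T :: "('c, 'r) tbox" and B :: 'c
    and SigC :: "'c set" and SigR :: "'r set" and R :: "('c, 'r) tbox"
  assumes "finite T"
    and "SigC = cnames C \<union> cnames D \<union> tbox_cnames T"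
    and "SigR = rnames C \<union> rnames D \<union> tbox_rnames T"
    and "B \<notin> SigC"
    and "R = {(CName B, CName A) | A. A \<in> SigC} \<union>
             {(CName B, All (Role r) (CName B)) | r. r \<in> SigR}"
  shows "subsumes TYPE('d) C T D \<longleftrightarrow>
         subsumes TYPE('d) (replBot B C) (replBotT B T \<union> R) (replBot B D)"
proof
  assume H: "subsumes TYPE('d) C T D"
  show "subsumes TYPE('d) (replBot B C) (replBotT B T \<union> R) (replBot B D)"
    unfolding subsumes_def
  proof (intro allI impI subsetI)
    fix J :: "('d,'c,'r) interp" and x
    assume M: "is_model J (replBotT B T \<union> R)" and x: "x \<in> cext_of J (replBot B C)"
    have J: "is_interp J" using M by (simp add: is_model_def)
    have sub: "cext J B \<subseteq> cext J A" if "A \<in> SigC" for A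
    proof -
      have "(CName B, CName A) \<in> replBotT B T \<union> R" using that assms(5) by auto
      from model_ax[OF M this] show ?thesis by simp
    qed
    have clo: "y \<in> cext J B" if "r \<in> SigR" "z \<in> cext J B" "(z,y) \<in> rext J r" for r z y
    proof -
      have "(CName B, All (Role r) (CName B)) \<in> replBotT B T \<union> R" using that assms(5) by auto
      from model_ax[OF M this] have "cext J B \<subseteq> cext_of J (All (Role r) (CName B))"
        by simp
      moreover have "(z,y) \<in> rexp_ext J (Role r)"
      proof -
        have "y \<in> dom J" using that(3) J unfolding is_interp_def by blast
        then have "(z,y) \<in> word_ext J [r]" using that(3) by auto
        then show ?thesis by (auto simp: rexp_ext_def)
      qed
      ultimately show ?thesis using that(2) by auto
    qed
    have cC: "cnames C \<subseteq> SigC" "rnames C \<subseteq> SigR" "cnames D \<subseteq> SigC" "rnames D \<subseteq> SigR"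
      using assms(2,3) by auto
    have subH: "\<forall>A. A \<in> SigC \<longrightarrow> cext J B \<subseteq> cext J A" using sub by blast
    have cloH: "\<forall>r x y. r \<in> SigR \<longrightarrow> x \<in> cext J B \<longrightarrow> (x,y) \<in> rext J r \<longrightarrow> y \<in> cext J B"
      using clo by blast
    show "x \<in> cext_of J (replBot B D)"
    proof (cases "x \<in> cext J B")
      case True then show ?thesis using B_in_all[where SC=SigC and SR=SigR, OF J subH cloH] cC by auto
    next
      case False
      have xd: "x \<in> dom J" using cext_of_dom[OF J] x by auto
      let ?I = "restr J (cext J B)"
      have I: "is_interp ?I" using restr_interp[OF J] xd False by blast
      have eq: "\<And>K y. cnames K \<subseteq> SigC \<Longrightarrow> rnames K \<subseteq> SigR \<Longrightarrow> y \<in> dom J - cext J B \<Longrightarrow>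
          y \<in> cext_of J (replBot B K) \<longleftrightarrow> y \<in> cext_of ?I K"
        using restr_concept[where SC=SigC and SR=SigR, OF J subH cloH] by blast
      have "is_model ?I T"
        unfolding is_model_def
      proof (intro conjI I ballI, clarify)
        fix K M' y assume KM: "(K, M') \<in> T" and y: "y \<in> cext_of ?I K"
        have sK: "cnames K \<subseteq> SigC" "rnames K \<subseteq> SigR" "cnames M' \<subseteq> SigC" "rnames M' \<subseteq> SigR"
          using KM assms(2,3) by (auto simp: tbox_cnames_def tbox_rnames_def)
        have yd: "y \<in> dom J - cext J B" using cext_of_dom[OF I] y by (auto simp: restr_def)
        have "(replBot B K, replBot B M') \<in> replBotT B T" using KM by (auto simp: replBotT_def)
        then have "cext_of J (replBot B K) \<subseteq> cext_of J (replBot B M')"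
          using model_ax[OF M] by blast
        then show "y \<in> cext_of ?I M'" using eq[OF sK(1,2) yd] eq[OF sK(3,4) yd] y by blast
      qed
      then have "cext_of ?I C \<subseteq> cext_of ?I D" using H by (simp add: subsumes_def)
      then show ?thesis using eq[OF cC(1,2)] eq[OF cC(3,4)] x xd False by blast
    qed
  qed
next
  assume H: "subsumes TYPE('d) (replBot B C) (replBotT B T \<union> R) (replBot B D)"
  show "subsumes TYPE('d) C T D"
    unfolding subsumes_def
  proof (intro allI impI)
    fix I :: "('d,'c,'r) interp"
    assume M: "is_model I T"
    let ?J = "I\<lparr>cext := (cext I)(B := {})\<rparr>"
    have fC: "B \<notin> cnames C" "B \<notin> cnames D" using assms(2,4) by auto
    have JI: "is_interp ?J" using M by (auto simp: is_model_def is_interp_def)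
    have ax: "cext_of ?J K \<subseteq> cext_of ?J M'" if "(K, M') \<in> replBotT B T \<union> R" for K M'
      using that
      proof
        assume "(K, M') \<in> replBotT B T"
        then obtain K0 M0 where KM: "(K0,M0) \<in> T" "K = replBot B K0" "M' = replBot B M0"
          by (auto simp: replBotT_def)
        have "B \<notin> cnames K0" "B \<notin> cnames M0" using KM(1) assms(2,4)
          by (auto simp: tbox_cnames_def)
        then show ?thesis using KM model_ax[OF M KM(1)] replBot_fresh[of B K0 I] replBot_fresh[of B M0 I]
          by simp
      next
        assume "(K, M') \<in> R"
        then have "K = CName B" using assms(5) by auto
        then show ?thesis by simp
      qed
    have "is_model ?J (replBotT B T \<union> R)"
      unfolding is_model_def using JI ax by blast
    then have "cext_of ?J (replBot B C) \<subseteq> cext_of ?J (replBot B D)" using H by (simp add: subsumes_def)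
    then show "cext_of I C \<subseteq> cext_of I D" using replBot_fresh[OF fC(1), of I] replBot_fresh[OF fC(2), of I] by simp
  qed
qed

end
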